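(* Let $G=(V,E,w)$ be a connected undirected graph with positive edge weights $w:E\to\mathbb{R}_{+}$, let $v\in V$, and let $E_v$ be a set of node pairs $\{u,v\}$ with $u\neq v$ and $\{u,v\}\notin E$ (candidate edges incident to $v$), each $e\in E_v$ having a given positive weight $w(e)$. For $S\subseteq E_v$ let $\mathcal{R}(S)$ denote the resistance distance of $v$ in the augmented graph $G(S)$. Then $\mathcal{R}$ is monotonically decreasing: for any subsets $S\subsetneq T\subseteq E_v$, $$\mathcal{R}(T)<\mathcal{R}(S).$$
   Context: For a connected weighted graph $H$ on node set $V$ with $|V|=n$, its Laplacian is $\mathbf{L}=\mathbf{D}-\mathbf{A}$, where $\mathbf{A}$ is the weighted adjacency matrix and $\mathbf{D}$ the diagonal matrix of weighted degrees; $\mathbf{L}^\dagger$ denotes its Moore–Penrose pseudoinverse. For nodes $a,b$ let $\mathbf{b}_{a,b}=\mathbf{e}_a-\mathbf{e}_b$ (standard basis vectors). The resistance distance between $a$ and $b$ is $\mathcal{R}_{ab}=\mathbf{b}_{a,b}^\top\mathbf{L}^\dagger\mathbf{b}_{a,b}$, and the resistance distance of node $v$ is $\mathcal{R}_v=\sum_{u\in V}\mathcal{R}_{uv}$. For $S\subseteq E_v$, $G(S)=(V,E\cup S,w')$ is the graph obtained by adding the edges of $S$ with their given weights (weights of edges in $E$ unchanged). *)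

theory Defs
  imports "HOL-Analysis.Analysis"
begin

text \<open>Nodes are the elements of a finite type 'n (so V = UNIV). An undirected edge is a
  two-element node set; a weight function w assigns weights to such sets.
  Matrices are real^'n^'n.\<close>

definition is_edge :: "'n set \<Rightarrow> bool" where
  "is_edge e \<longleftrightarrow> (\<exists>a b. a \<noteq> b \<and> e = {a, b})"

definition adj_mat :: "'n::finite set set \<Rightarrow> ('n set \<Rightarrow> real) \<Rightarrow> real^'n^'n" where
  "adj_mat F w = (\<chi> a b. if a \<noteq> b \<and> {a, b} \<in> F then w {a, b} else 0)"

definition laplacian :: "'n::finite set set \<Rightarrow> ('n set \<Rightarrow> real) \<Rightarrow> real^'n^'n" where
  "laplacian F w = (\<chi> a b. (if a = b then (\<Sum>c\<in>UNIV. adj_mat F w $ a $ c) else 0)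
                           - adj_mat F w $ a $ b)"

definition pinv :: "real^'n^'n \<Rightarrow> real^'n^'n" where
  "pinv A = (THE X. A ** X ** A = A \<and> X ** A ** X = X \<and>
                    transpose (A ** X) = A ** X \<and> transpose (X ** A) = X ** A)"

definition bvec :: "'n::finite \<Rightarrow> 'n \<Rightarrow> real^'n" where
  "bvec a b = axis a 1 - axis b 1"

definition resistance :: "'n::finite set set \<Rightarrow> ('n set \<Rightarrow> real) \<Rightarrow> 'n \<Rightarrow> 'n \<Rightarrow> real" where
  "resistance F w a b = bvec a b \<bullet> (pinv (laplacian F w) *v bvec a b)"

definition node_resistance :: "'n::finite set set \<Rightarrow> ('n set \<Rightarrow> real) \<Rightarrow> 'n \<Rightarrow> real" where
  "node_resistance F w v = (\<Sum>u\<in>UNIV. resistance F w u v)"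

definition connected_graph :: "'n set set \<Rightarrow> bool" where
  "connected_graph F \<longleftrightarrow> (\<forall>a b. (a, b) \<in> {(x, y). {x, y} \<in> F}\<^sup>*)"

end

theory Submission
  imports Defs
begin

lemma adj_sym: "adj_mat F w $ a $ b = adj_mat F w $ b $ a"
  by (simp add: adj_mat_def insert_commute)

lemma lap_transpose: "transpose (laplacian F w) = laplacian F w"
  unfolding transpose_def vec_eq_iff
  by (auto simp: laplacian_def adj_sym[of F w])

lemma lap_entry: "laplacian F w $ a $ b = (if a = b then (\<Sum>c\<in>UNIV. adj_mat F w $ a $ c) else 0) - adj_mat F w $ a $ b"
  by (simp add: laplacian_def)

lemma lap_mulv: "(laplacian F w *v y) $ a = (\<Sum>c\<in>UNIV. adj_mat F w $ a $ c * (y $ a - y $ c))"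
proof -
  have "(laplacian F w *v y) $ a = (\<Sum>c\<in>UNIV. (if a = c then (\<Sum>d\<in>UNIV. adj_mat F w $ a $ d) * y $ c else 0)) - (\<Sum>c\<in>UNIV. adj_mat F w $ a $ c * y $ c)"
    unfolding matrix_vector_mult_def vec_lambda_beta sum_subtractf[symmetric]
    by (rule sum.cong) (auto simp: lap_entry left_diff_distrib)
  also have "\<dots> = (\<Sum>c\<in>UNIV. adj_mat F w $ a $ c * (y $ a - y $ c))"
    by (simp add: sum.delta sum_distrib_right right_diff_distrib sum_subtractf)
  finally show ?thesis .
qed

lemma quad1: "x \<bullet> (laplacian F w *v y) = (\<Sum>a\<in>UNIV. \<Sum>c\<in>UNIV. adj_mat F w $ a $ c * x $ a * (y $ a - y $ c))"
  by (simp add: inner_vec_def lap_mulv sum_distrib_left mult_ac)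

lemma quad: "x \<bullet> (laplacian F w *v y) = (\<Sum>a\<in>UNIV. \<Sum>c\<in>UNIV. adj_mat F w $ a $ c * (x $ a - x $ c) * (y $ a - y $ c)) / 2"
proof -
  let ?A = "adj_mat F w"
  have s: "(\<Sum>a\<in>UNIV. \<Sum>c\<in>UNIV. ?A $ a $ c * x $ a * (y $ a - y $ c))
     = (\<Sum>a\<in>UNIV. \<Sum>c\<in>UNIV. - (?A $ a $ c * x $ c * (y $ a - y $ c)))"
    apply (subst sum.swap)
    apply (rule sum.cong, rule refl, rule sum.cong, rule refl)
    by (simp add: adj_sym[of F w] algebra_simps)
  have "2 * (x \<bullet> (laplacian F w *v y)) = (\<Sum>a\<in>UNIV. \<Sum>c\<in>UNIV. ?A $ a $ c * x $ a * (y $ a - y $ c))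
     - (\<Sum>a\<in>UNIV. \<Sum>c\<in>UNIV. (?A $ a $ c * x $ c * (y $ a - y $ c)))"
    using s quad1[of x F w y] by (simp add: sum_negf)
  also have "\<dots> = (\<Sum>a\<in>UNIV. \<Sum>c\<in>UNIV. ?A $ a $ c * (x $ a - x $ c) * (y $ a - y $ c))"
    by (simp add: sum_subtractf[symmetric] sum.distrib[symmetric] algebra_simps)
  finally show ?thesis by simp
qed


lemma mm_diff_l: "(A::real^'n^'n) ** (B - C) = A ** B - A ** C"
  by (simp add: matrix_matrix_mult_def vec_eq_iff sum_subtractf[symmetric] algebra_simps)
lemma mm_diff_r: "((A::real^'n^'n) - B) ** C = A ** C - B ** C"
  by (simp add: matrix_matrix_mult_def vec_eq_iff sum_subtractf[symmetric] algebra_simps)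
lemma mm_add_r: "((A::real^'n^'n) + B) ** C = A ** C + B ** C"
  by (simp add: matrix_matrix_mult_def vec_eq_iff sum.distrib[symmetric] algebra_simps)
lemma transpose_diff: "transpose ((A::real^'n^'n) - B) = transpose A - transpose B"
  by (simp add: transpose_def vec_eq_iff)

lemma penrose_unique:
  fixes A X Y :: "real^'n^'n"
  assumes X1: "A ** X ** A = A" and X2: "X ** A ** X = X" and X3: "transpose (A ** X) = A ** X"
    and X4: "transpose (X ** A) = X ** A"
    and Y1: "A ** Y ** A = A" and Y2: "Y ** A ** Y = Y" and Y3: "transpose (A ** Y) = A ** Y"
    and Y4: "transpose (Y ** A) = Y ** A"
  shows "X = Y"
proof -
  have e1: "A ** X = (A ** Y) ** (A ** X)"
    by (simp add: matrix_mul_assoc Y1)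
  have "A ** X = transpose (A ** X)" using X3 by simp
  also have "\<dots> = transpose ((A ** Y) ** (A ** X))"
    using e1 by simp
  also have "\<dots> = (A ** X) ** (A ** Y)"
    by (subst matrix_transpose_mul) (simp only: X3 Y3)
  also have "\<dots> = A ** Y" by (simp add: matrix_mul_assoc X1)
  finally have AX: "A ** X = A ** Y" .
  have Y1': "A ** (Y ** A) = A" using Y1 by (simp add: matrix_mul_assoc)
  have X1': "A ** (X ** A) = A" using X1 by (simp add: matrix_mul_assoc)
  have e2: "X ** A = (X ** A) ** (Y ** A)"
    by (simp add: matrix_mul_assoc[symmetric] Y1')
  have "X ** A = transpose (X ** A)" using X4 by simp
  also have "\<dots> = transpose ((X ** A) ** (Y ** A))"
    using e2 by simp
  also have "\<dots> = (Y ** A) ** (X ** A)"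
    by (subst matrix_transpose_mul) (simp only: X4 Y4)
  also have "\<dots> = Y ** A" by (simp add: matrix_mul_assoc[symmetric] X1')
  finally have XA: "X ** A = Y ** A" .
  have "X = X ** (A ** X)" by (simp add: matrix_mul_assoc X2)
  also have "\<dots> = (X ** A) ** Y" by (simp add: AX matrix_mul_assoc)
  also have "\<dots> = Y" by (simp add: XA Y2)
  finally show ?thesis .
qed

lemma pinv_eq:
  fixes A X :: "real^'n^'n"
  assumes "A ** X ** A = A" "X ** A ** X = X" "transpose (A ** X) = A ** X"
    "transpose (X ** A) = X ** A"
  shows "pinv A = X"
  unfolding pinv_def
proof (rule the_equality)
  show "A ** X ** A = A \<and> X ** A ** X = X \<and> transpose (A ** X) = A ** X \<and> transpose (X ** A) = X ** A"
    using assms by (intro conjI)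
next
  fix Y assume "A ** Y ** A = A \<and> Y ** A ** Y = Y \<and> transpose (A ** Y) = A ** Y \<and> transpose (Y ** A) = Y ** A"
  then show "Y = X" using penrose_unique[OF _ _ _ _ assms, of Y] by (elim conjE)
qed

definition Jm :: "real^'n::finite^'n" where "Jm = (\<chi> i j. 1 / real CARD('n))"

lemma lap_J: fixes F :: "'n::finite set set" shows "laplacian F w ** Jm = 0"
proof -
  have "(laplacian F w ** Jm) $ i $ j = (laplacian F w *v (\<chi> k. 1 / real CARD('n))) $ i" for i j
    by (simp add: matrix_matrix_mult_def matrix_vector_mult_def Jm_def)
  also have "(laplacian F w *v (\<chi> k. 1 / real CARD('n))) $ i = 0" for i
    by (simp add: lap_mulv)
  finally show ?thesis by (simp add: vec_eq_iff)
qed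

lemma Jm_transpose: "transpose Jm = Jm"
  by (simp add: transpose_def Jm_def vec_eq_iff)

lemma J_lap: "Jm ** laplacian F w = 0"
proof -
  have "transpose (Jm ** laplacian F w) = 0"
    by (simp add: matrix_transpose_mul lap_transpose Jm_transpose lap_J)
  then have "transpose (transpose (Jm ** laplacian F w)) = transpose (0::real^'a^'a)" by simp
  then show ?thesis by (simp only: transpose_transpose) (simp add: transpose_def vec_eq_iff)
qed

lemma JJ: "Jm ** Jm = (Jm :: real^'n::finite^'n)"
  by (simp add: matrix_matrix_mult_def Jm_def vec_eq_iff)

lemma adj_nonneg: "\<forall>e\<in>F. w e > 0 \<Longrightarrow> adj_mat F w $ a $ c \<ge> 0"
  by (auto simp: adj_mat_def less_imp_le)

lemma quad_nonneg: "\<forall>e\<in>F. w e > 0 \<Longrightarrow> x \<bullet> (laplacian F w *v x) \<ge> 0"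
  unfolding quad
  by (intro divide_nonneg_pos sum_nonneg) (simp_all add: adj_nonneg mult.assoc)

lemma quad_zero:
  assumes pos: "\<forall>e\<in>F. w e > 0" and conn: "connected_graph E" and EF: "E \<subseteq> F"
    and z: "x \<bullet> (laplacian F w *v x) = 0"
  shows "x $ a = x $ b"
proof -
  let ?A = "adj_mat F w"
  have nn: "\<And>a c. ?A $ a $ c * (x $ a - x $ c) * (x $ a - x $ c) \<ge> 0"
    by (simp add: adj_nonneg[OF pos] mult.assoc)
  have "(\<Sum>a\<in>UNIV. \<Sum>c\<in>UNIV. ?A $ a $ c * (x $ a - x $ c) * (x $ a - x $ c)) = 0"
    using z unfolding quad by simp
  then have "\<forall>a\<in>UNIV. (\<Sum>c\<in>UNIV. ?A $ a $ c * (x $ a - x $ c) * (x $ a - x $ c)) = 0"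
    by (subst sum_nonneg_eq_0_iff[symmetric]) (auto intro: sum_nonneg nn)
  then have all0: "\<And>a c. ?A $ a $ c * (x $ a - x $ c) * (x $ a - x $ c) = 0"
  proof -
    fix a c
    have "(\<Sum>c\<in>UNIV. ?A $ a $ c * (x $ a - x $ c) * (x $ a - x $ c)) = 0" using \<open>\<forall>a\<in>UNIV. _\<close> by blast
    then have "\<forall>c\<in>UNIV. ?A $ a $ c * (x $ a - x $ c) * (x $ a - x $ c) = 0"
      by (subst sum_nonneg_eq_0_iff[symmetric]) (auto intro: nn)
    then show "?A $ a $ c * (x $ a - x $ c) * (x $ a - x $ c) = 0" by blast
  qed
  have edge: "x $ p = x $ q" if "{p, q} \<in> E" for p q
  proof (cases "p = q")
    case False
    then have "?A $ p $ q = w {p, q}" using that EF by (auto simp: adj_mat_def)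
    moreover have "w {p, q} > 0" using that EF pos by auto
    ultimately show ?thesis using all0[of p q] by simp
  qed simp
  have "(a, b) \<in> {(x, y). {x, y} \<in> E}\<^sup>*" using conn by (simp add: connected_graph_def)
  then show ?thesis
    by (induction rule: rtrancl_induct) (auto dest: edge)
qed


lemma Jm_mulv: "(Jm *v x) $ i = (\<Sum>j\<in>UNIV. x $ j) / real CARD('n)" for x :: "real^'n::finite"
  by (simp add: matrix_vector_mult_def Jm_def sum_divide_distrib)

lemma Jm_quad: "x \<bullet> (Jm *v x) = (\<Sum>j\<in>UNIV. x $ j)^2 / real CARD('n)" for x :: "real^'n::finite"
  by (simp add: inner_vec_def Jm_mulv power2_eq_square sum_divide_distrib[symmetric] sum_distrib_right[symmetric])

lemma M_inj:
  fixes F E :: "'n::finite set set"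
  assumes pos: "\<forall>e\<in>F. w e > 0" and conn: "connected_graph E" and EF: "E \<subseteq> F"
    and z: "(laplacian F w + Jm) *v x = 0"
  shows "x = 0"
proof -
  have "0 = x \<bullet> ((laplacian F w + Jm) *v x)" using z by simp
  also have "\<dots> = x \<bullet> (laplacian F w *v x) + x \<bullet> (Jm *v x)"
    by (simp add: matrix_vector_mult_add_rdistrib inner_add_right)
  finally have s: "0 = x \<bullet> (laplacian F w *v x) + x \<bullet> (Jm *v x)" .
  have n1: "x \<bullet> (laplacian F w *v x) \<ge> 0" by (rule quad_nonneg[OF pos])
  have n2: "x \<bullet> (Jm *v x) \<ge> 0" by (simp add: Jm_quad)
  have z1: "x \<bullet> (laplacian F w *v x) = 0" using s n1 n2 by linarith
  have z2: "x \<bullet> (Jm *v x) = 0" using s n1 n2 by linarith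
  have eq: "\<And>a b. x $ a = x $ b" using quad_zero[OF pos conn EF z1] .
  have "(\<Sum>j\<in>UNIV. x $ j)^2 / real CARD('n) = 0" using z2 by (simp add: Jm_quad)
  then have "(\<Sum>j\<in>UNIV. x $ j) = 0" by simp
  moreover have "(\<Sum>j\<in>UNIV. x $ j) = real CARD('n) * x $ a" for a
  proof -
    have "(\<Sum>j\<in>UNIV. x $ j) = (\<Sum>j\<in>(UNIV::'n set). x $ a)" by (intro sum.cong refl) (rule eq)
    then show ?thesis by simp
  qed
  ultimately have "x $ a = 0" for a by simp
  then show ?thesis by (simp add: vec_eq_iff)
qed

lemma pinv_lap:
  fixes F E :: "'n::finite set set"
  assumes pos: "\<forall>e\<in>F. w e > 0" and conn: "connected_graph E" and EF: "E \<subseteq> F"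
  shows "laplacian F w ** pinv (laplacian F w) = mat 1 - Jm"
proof -
  let ?L = "laplacian F w"
  define M where "M = ?L + Jm"
  have "\<forall>x. M *v x = 0 \<longrightarrow> x = 0" using M_inj[OF pos conn EF] by (simp add: M_def)
  then obtain B where BM: "B ** M = mat 1" using matrix_left_invertible_ker by blast
  then have MB: "M ** B = mat 1" using matrix_left_right_inverse by blast
  have MJ: "M ** Jm = Jm" by (simp add: M_def mm_add_r lap_J JJ)
  have JM: "Jm ** M = Jm" by (simp add: M_def matrix_add_ldistrib J_lap JJ)
  have BJ: "B ** Jm = Jm" by (metis MJ BM matrix_mul_assoc matrix_mul_lid)
  have JB: "Jm ** B = Jm" by (metis JM MB matrix_mul_assoc matrix_mul_rid)
  have LM: "?L = M - Jm" by (simp add: M_def)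
  define X where "X = B - Jm"
  have LX: "?L ** X = mat 1 - Jm"
    by (simp add: X_def mm_diff_l lap_J) (simp add: LM mm_diff_r MB JB)
  have XL: "X ** ?L = mat 1 - Jm"
    by (simp add: X_def mm_diff_r J_lap) (simp add: LM mm_diff_l BM BJ)
  have T: "transpose (mat 1 - Jm) = mat 1 - (Jm :: real^'n^'n)"
    by (simp add: transpose_diff Jm_transpose)
  have P1: "?L ** X ** ?L = ?L" by (simp add: LX mm_diff_r J_lap)
  have P2: "X ** ?L ** X = X" by (simp add: XL mm_diff_r) (simp add: X_def mm_diff_l JB JJ)
  have "pinv ?L = X" by (rule pinv_eq) (use P1 P2 LX XL T in auto)
  then show ?thesis using LX by simp
qed

lemma sum_bvec: "(\<Sum>j\<in>UNIV. bvec a b $ j) = 0"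
  by (simp add: bvec_def axis_def sum_subtractf)

lemma lap_solve:
  fixes F E :: "'n::finite set set"
  assumes pos: "\<forall>e\<in>F. w e > 0" and conn: "connected_graph E" and EF: "E \<subseteq> F"
  shows "laplacian F w *v (pinv (laplacian F w) *v bvec a b) = bvec a b"
proof -
  have "laplacian F w *v (pinv (laplacian F w) *v bvec a b) = (mat 1 - Jm) *v bvec a b"
    by (simp add: matrix_vector_mul_assoc pinv_lap[OF pos conn EF])
  also have "\<dots> = bvec a b - Jm *v bvec a b" by (simp add: matrix_vector_mult_diff_rdistrib)
  also have "Jm *v bvec a b = 0" by (simp add: vec_eq_iff Jm_mulv sum_bvec)
  finally show ?thesis by simp
qed


lemma adj_split: "D \<inter> F = {} \<Longrightarrow> adj_mat (F \<union> D) w = adj_mat F w + adj_mat D w"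
  by (auto simp: adj_mat_def vec_eq_iff)

lemma quad_sym: "x \<bullet> (laplacian F w *v y) = y \<bullet> (laplacian F w *v x)"
  unfolding quad by (intro arg_cong[where f="\<lambda>t. t / 2"] sum.cong refl) (simp add: mult_ac)

lemma two_terms:
  fixes f :: "'n::finite \<Rightarrow> 'n \<Rightarrow> real"
  assumes nn: "\<And>a c. f a c \<ge> 0" and pq: "p \<noteq> q"
  shows "f p q + f q p \<le> (\<Sum>a\<in>UNIV. \<Sum>c\<in>UNIV. f a c)"
proof -
  have "(\<Sum>a\<in>UNIV. \<Sum>c\<in>UNIV. f a c) = (\<Sum>z\<in>UNIV \<times> UNIV. case_prod f z)"
    by (rule sum.cartesian_product)
  also have "\<dots> \<ge> (\<Sum>z\<in>{(p,q),(q,p)}. case_prod f z)"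
    by (rule sum_mono2) (auto simp: nn)
  finally show ?thesis using pq by simp
qed

lemma main_step:
  fixes E FS D :: "'n::finite set set"
  assumes pos: "\<forall>e\<in>FS \<union> D. w e > 0" and conn: "connected_graph E" and EF: "E \<subseteq> FS"
    and disj: "D \<inter> FS = {}"
  shows "resistance (FS \<union> D) w a v \<le> resistance FS w a v"
    and "a \<noteq> v \<Longrightarrow> {a, v} \<in> D \<Longrightarrow> resistance (FS \<union> D) w a v < resistance FS w a v"
proof -
  let ?b = "bvec a v"
  let ?LS = "laplacian FS w" and ?LT = "laplacian (FS \<union> D) w"
  define yS where "yS = pinv ?LS *v ?b"
  define yT where "yT = pinv ?LT *v ?b"
  have posS: "\<forall>e\<in>FS. w e > 0" and posD: "\<forall>e\<in>D. w e > 0" using pos by auto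
  have S: "?LS *v yS = ?b" unfolding yS_def by (rule lap_solve[OF posS conn EF])
  have T: "?LT *v yT = ?b" unfolding yT_def by (rule lap_solve[OF pos conn]) (use EF in auto)
  define RS where "RS = resistance FS w a v"
  define RT where "RT = resistance (FS \<union> D) w a v"
  have RS: "RS = ?b \<bullet> yS" by (simp add: RS_def resistance_def yS_def)
  have RT: "RT = ?b \<bullet> yT" by (simp add: RT_def resistance_def yT_def)
  define qD where "qD = (\<Sum>a\<in>UNIV. \<Sum>c\<in>UNIV. adj_mat D w $ a $ c * (yT $ a - yT $ c) * (yT $ a - yT $ c)) / 2"
  have qD_nn: "qD \<ge> 0" unfolding qD_def
    by (intro divide_nonneg_pos sum_nonneg) (simp_all add: adj_nonneg[OF posD] mult.assoc)
  have split: "yT \<bullet> (?LT *v yT) = yT \<bullet> (?LS *v yT) + qD"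
    unfolding quad qD_def adj_split[OF disj]
    by (simp add: sum.distrib[symmetric] algebra_simps add_divide_distrib)
  have e1: "yT \<bullet> (?LT *v yT) = RT" using T RT by (simp add: inner_commute)
  have e2: "yT \<bullet> (?LS *v yS) = RT" using S RT by (simp add: inner_commute)
  have e3: "yS \<bullet> (?LS *v yS) = RS" using S RS by (simp add: inner_commute)
  have e4: "yS \<bullet> (?LS *v yT) = RT" using e2 quad_sym by metis
  have "0 \<le> (yT - yS) \<bullet> (?LS *v (yT - yS))" by (rule quad_nonneg[OF posS])
  also have "\<dots> = yT \<bullet> (?LS *v yT) - yT \<bullet> (?LS *v yS) - yS \<bullet> (?LS *v yT) + yS \<bullet> (?LS *v yS)"
    by (simp add: matrix_vector_mult_diff_distrib inner_diff_left inner_diff_right)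
  finally have key: "RT + qD \<le> RS" using split e1 e2 e3 e4 by linarith
  then show "RT \<le> RS" using qD_nn by linarith
  assume av: "a \<noteq> v" and aD: "{a, v} \<in> D"
  have RT_val: "RT = yT $ a - yT $ v"
    by (simp add: RT bvec_def inner_diff_left inner_axis')
  have RT_nz: "RT \<noteq> 0"
  proof
    assume "RT = 0"
    then have "yT \<bullet> (?LT *v yT) = 0" using e1 by simp
    then have c: "\<And>p q. yT $ p = yT $ q" using quad_zero[OF pos conn] EF by blast
    have c0: "\<And>p q. yT $ p - yT $ q = 0" using c by simp
    have "?LT *v yT = 0" by (simp add: vec_eq_iff lap_mulv c0)
    then have "?b $ a = 0" using T by simp
    then show False using av by (simp add: bvec_def axis_def)
  qed
  have wav: "adj_mat D w $ a $ v = w {a, v}" "adj_mat D w $ v $ a = w {a, v}"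
    using av aD by (auto simp: adj_mat_def insert_commute)
  have wpos: "w {a, v} > 0" using posD aD by auto
  have "adj_mat D w $ a $ v * (yT $ a - yT $ v) * (yT $ a - yT $ v)
      + adj_mat D w $ v $ a * (yT $ v - yT $ a) * (yT $ v - yT $ a) \<le> 2 * qD"
    unfolding qD_def
    by (rule order_trans[OF two_terms[OF _ av]]) (simp_all add: adj_nonneg[OF posD] mult.assoc)
  then have "2 * (w {a, v} * RT * RT) \<le> 2 * qD" unfolding RT_val wav by (simp add: algebra_simps)
  moreover have "w {a, v} * RT * RT > 0" using wpos RT_nz by (metis mult.assoc mult_pos_pos not_real_square_gt_zero)
  ultimately have "qD > 0" by linarith
  then show "RT < RS" using key by linarith
qed


theorem theorem1:
  fixes E Ev :: "'n::finite set set" and w :: "'n set \<Rightarrow> real" and v :: 'n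
  assumes edges: "\<forall>e\<in>E. is_edge e"
    and pos: "\<forall>e\<in>E. w e > 0"
    and conn: "connected_graph E"
    and cand: "\<forall>e\<in>Ev. \<exists>u. u \<noteq> v \<and> e = {u, v} \<and> e \<notin> E"
    and cand_pos: "\<forall>e\<in>Ev. w e > 0"
    and ST: "S \<subset> T" "T \<subseteq> Ev"
  shows "node_resistance (E \<union> T) w v < node_resistance (E \<union> S) w v"
proof -
  define D where "D = T - S"
  have ET: "E \<union> T = (E \<union> S) \<union> D" using ST by (auto simp: D_def)
  have disj: "D \<inter> (E \<union> S) = {}" using ST cand by (auto simp: D_def)
  have posT: "\<forall>e\<in>(E \<union> S) \<union> D. w e > 0" using ST pos cand_pos ET by auto
  obtain e where eD: "e \<in> D" using ST by (auto simp: D_def)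
  have "e \<in> Ev" using eD ST by (auto simp: D_def)
  then obtain u where u: "u \<noteq> v" "e = {u, v}" using cand by blast
  have "(\<Sum>x\<in>UNIV. resistance ((E \<union> S) \<union> D) w x v) < (\<Sum>x\<in>UNIV. resistance (E \<union> S) w x v)"
  proof (rule sum_strict_mono_ex1)
    show "\<forall>x\<in>UNIV. resistance ((E \<union> S) \<union> D) w x v \<le> resistance (E \<union> S) w x v"
      using main_step(1)[OF posT conn _ disj] by blast
    show "\<exists>a\<in>UNIV. resistance ((E \<union> S) \<union> D) w a v < resistance (E \<union> S) w a v"
      using main_step(2)[OF posT conn _ disj u(1)] eD u by blast
  qed simp
  then show ?thesis unfolding node_resistance_def ET .
qed

end
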